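(* Let $A$ be a connected monounary algebra and $a\in A$ with $A'=\{a\}$. If $A$ contains no cycle and the subalgebra $A\setminus P(a)$ is not isomorphic to $Z$, then there is $B\in\mathbf R(A)\cap\mathcal S^{(1)}$ such that $\mathbf V(A)=\mathbf V(B,E)$.
   Context: A monounary algebra is a pair $(A,f)$ with $A$ a nonempty set and $f:A\to A$; a partial monounary algebra allows $f$ to be partial. Direct products are coordinatewise. It is connected if for all $x,y$ there are $m,n\ge0$ with $f^m(x)=f^n(y)$; it contains a cycle if $f^k(x)=x$ for some $x$, $k\ge1$. A retract of $A$ is a nonempty subalgebra $M$ such that there is an endomorphism $h:A\to M$ with $h|_M=\mathrm{id}$; $\mathbf R(A)$ is the class of algebras isomorphic to a retract of $A$. A retract variety is a class closed under isomorphisms, retracts and direct products; $\mathbf V(\mathcal K)$ is the smallest retract variety containing $\mathcal K$, $\mathbf V(B,E)=\mathbf V(\{B,E\})$. For $x\in A$: $f^{-1}(x)=\{y:f(y)=x\}$, $f^{-n}(x)=\bigcup_{z\in f^{-(n-1)}(x)}f^{-1}(z)$, $P(x)=\{x\}\cup\bigcup_{n\ge1}f^{-n}(x)$, regarded as a partial monounary algebra with $f$ restricted to those $y\in P(x)$ with $f(y)\in P(x)$. $A^{(\infty)}$ is the set of $x\in A$ admitting $x_0=x,x_1,\dots$ with $f(x_n)=x_{n-1}$ for $n\ge1$; $A'=\{x\in A\setminus A^{(\infty)}: f(x)\in A^{(\infty)}\}$. Condition ($\bigstar$) on $(A,f)$: whenever $x_1,x_2,x_3\in A$ with $f(x_1)=f(x_2)=f(x_3)$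 and $P(x_1),P(x_2),P(x_3)$ pairwise isomorphic, then $|\{x_1,x_2,x_3\}|\le2$. $\mathcal U^\bigstar_c$ is the class of connected monounary algebras satisfying ($\bigstar$). $Z=(\mathbb Z,k\mapsto k+1)$; for $n\in\mathbb N$, $\underline n=(\mathbb Z_n,k\mapsto k+1\bmod n)$; $E$ has universe $\mathbb Z\cup\{(k,1):k\in\mathbb N\}$ with $f(k)=k+1$ on $\mathbb Z$, $f((k,1))=(k-1,1)$ for $k>1$, $f((1,1))=0$; $\widehat n$ has universe $\mathbb Z_n\cup\{(k,1):k\in\mathbb N\}$ with $f(k)=k+1\bmod n$ on $\mathbb Z_n$, $f((k,1))=(k-1,1)$ for $k>1$, $f((1,1))=0$. $\mathcal S^{(0)}$ is the class of algebras isomorphic to $Z$, $E$, or to $\underline n$ or $\widehat n$ for some $n\in\mathbb N$; $\mathcal S^{(1)}$ is the class of $A\in\mathcal U^\bigstar_c$ for which there is $a\in A$ with $A'=\{a\}$ and the subalgebra $A\setminus P(a)$ in $\mathcal S^{(0)}$. *)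

theory Defs
  imports "HOL-Library.FuncSet"
begin

text \<open>A monounary algebra is represented by a carrier set S and an operation f
  (only its values on S matter).\<close>

definition is_malg :: "'a set \<Rightarrow> ('a \<Rightarrow> 'a) \<Rightarrow> bool" where
  "is_malg S f \<longleftrightarrow> S \<noteq> {} \<and> (\<forall>x\<in>S. f x \<in> S)"

definition malg_iso :: "'a set \<Rightarrow> ('a \<Rightarrow> 'a) \<Rightarrow> 'b set \<Rightarrow> ('b \<Rightarrow> 'b) \<Rightarrow> bool" where
  "malg_iso S f T g \<longleftrightarrow> (\<exists>h. bij_betw h S T \<and> (\<forall>x\<in>S. h (f x) = g (h x)))"

definition is_retract :: "'a set \<Rightarrow> 'a set \<Rightarrow> ('a \<Rightarrow> 'a) \<Rightarrow> bool" where
  "is_retract M S f \<longleftrightarrow> M \<noteq> {} \<and> M \<subseteq> S \<and> (\<forall>x\<in>M. f x \<in> M) \<and>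
     (\<exists>h. (\<forall>x\<in>S. h x \<in> M \<and> h (f x) = f (h x)) \<and> (\<forall>x\<in>M. h x = x))"

definition in_R :: "'b set \<Rightarrow> ('b \<Rightarrow> 'b) \<Rightarrow> 'a set \<Rightarrow> ('a \<Rightarrow> 'a) \<Rightarrow> bool" where
  "in_R T g S f \<longleftrightarrow> (\<exists>M. is_retract M S f \<and> malg_iso T g M f)"

definition prod_carrier :: "'i set \<Rightarrow> ('i \<Rightarrow> 'd set \<times> ('d \<Rightarrow> 'd)) \<Rightarrow> ('i \<Rightarrow> 'd) set" where
  "prod_carrier I C = PiE I (\<lambda>i. fst (C i))"

definition prod_op :: "'i set \<Rightarrow> ('i \<Rightarrow> 'd set \<times> ('d \<Rightarrow> 'd)) \<Rightarrow> ('i \<Rightarrow> 'd) \<Rightarrow> ('i \<Rightarrow> 'd)" where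
  "prod_op I C = (\<lambda>x. restrict (\<lambda>i. snd (C i) (x i)) I)"

text \<open>Membership in the retract variety V(K): isomorphic to a retract of a direct
  product of members of K (K given as an isomorphism-closed predicate on algebras
  of a fixed type 'd; the index type 'i is fixed by the TYPE argument).\<close>
definition in_V :: "('d set \<Rightarrow> ('d \<Rightarrow> 'd) \<Rightarrow> bool) \<Rightarrow> 'i itself \<Rightarrow> 'c set \<Rightarrow> ('c \<Rightarrow> 'c) \<Rightarrow> bool" where
  "in_V K _ X g \<longleftrightarrow> (\<exists>(I::'i set) C.
      (\<forall>i\<in>I. is_malg (fst (C i)) (snd (C i)) \<and> K (fst (C i)) (snd (C i))) \<and>
      in_R X g (prod_carrier I C) (prod_op I C))"

definition connected_malg :: "'a set \<Rightarrow> ('a \<Rightarrow> 'a) \<Rightarrow> bool" where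
  "connected_malg S f \<longleftrightarrow> (\<forall>x\<in>S. \<forall>y\<in>S. \<exists>m n. (f ^^ m) x = (f ^^ n) y)"

definition has_cycle :: "'a set \<Rightarrow> ('a \<Rightarrow> 'a) \<Rightarrow> bool" where
  "has_cycle S f \<longleftrightarrow> (\<exists>x\<in>S. \<exists>k\<ge>1. (f ^^ k) x = x)"

definition Pset :: "'a set \<Rightarrow> ('a \<Rightarrow> 'a) \<Rightarrow> 'a \<Rightarrow> 'a set" where
  "Pset S f x = {y\<in>S. \<exists>n. (f ^^ n) y = x}"

text \<open>Isomorphism of partial monounary algebras (P, f restricted to P).\<close>
definition partial_iso :: "'a set \<Rightarrow> 'a set \<Rightarrow> ('a \<Rightarrow> 'a) \<Rightarrow> bool" where
  "partial_iso P1 P2 f \<longleftrightarrow> (\<exists>h. bij_betw h P1 P2 \<and>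
     (\<forall>y\<in>P1. (f y \<in> P1 \<longleftrightarrow> f (h y) \<in> P2) \<and> (f y \<in> P1 \<longrightarrow> h (f y) = f (h y))))"

definition inf_part :: "'a set \<Rightarrow> ('a \<Rightarrow> 'a) \<Rightarrow> 'a set" where
  "inf_part S f = {x\<in>S. \<exists>s. s 0 = x \<and> (\<forall>n. s n \<in> S \<and> f (s (Suc n)) = s n)}"

definition prime_part :: "'a set \<Rightarrow> ('a \<Rightarrow> 'a) \<Rightarrow> 'a set" where
  "prime_part S f = {x\<in>S - inf_part S f. f x \<in> inf_part S f}"

definition star_cond :: "'a set \<Rightarrow> ('a \<Rightarrow> 'a) \<Rightarrow> bool" where
  "star_cond S f \<longleftrightarrow> (\<forall>x1\<in>S. \<forall>x2\<in>S. \<forall>x3\<in>S.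
     f x1 = f x2 \<and> f x2 = f x3 \<and>
     partial_iso (Pset S f x1) (Pset S f x2) f \<and>
     partial_iso (Pset S f x1) (Pset S f x3) f \<and>
     partial_iso (Pset S f x2) (Pset S f x3) f \<longrightarrow> card {x1, x2, x3} \<le> 2)"

definition in_Ustar_c :: "'a set \<Rightarrow> ('a \<Rightarrow> 'a) \<Rightarrow> bool" where
  "in_Ustar_c S f \<longleftrightarrow> is_malg S f \<and> connected_malg S f \<and> star_cond S f"

definition Z_op :: "int \<Rightarrow> int" where "Z_op k = k + 1"

text \<open>The algebra E: Inl k stands for k \<in> \<int>, Inr k for (k,1), k \<ge> 1.\<close>
definition E_car :: "(int + nat) set" where
  "E_car = range Inl \<union> Inr ` {1..}"

fun E_op :: "int + nat \<Rightarrow> int + nat" where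
  "E_op (Inl k) = Inl (k + 1)"
| "E_op (Inr k) = (if k > 1 then Inr (k - 1) else Inl 0)"

text \<open>The cycle n (carrier Z_n = {0..<n}).\<close>
definition cyc_op :: "nat \<Rightarrow> nat \<Rightarrow> nat" where
  "cyc_op n k = (k + 1) mod n"

text \<open>The algebra n-hat: Inl k for k \<in> Z_n, Inr k for (k,1), k \<ge> 1.\<close>
definition hat_car :: "nat \<Rightarrow> (nat + nat) set" where
  "hat_car n = Inl ` {0..<n} \<union> Inr ` {1..}"

fun hat_op :: "nat \<Rightarrow> nat + nat \<Rightarrow> nat + nat" where
  "hat_op n (Inl k) = Inl ((k + 1) mod n)"
| "hat_op n (Inr k) = (if k > 1 then Inr (k - 1) else Inl 0)"

definition in_S0 :: "'a set \<Rightarrow> ('a \<Rightarrow> 'a) \<Rightarrow> bool" where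
  "in_S0 S f \<longleftrightarrow> malg_iso S f (UNIV :: int set) Z_op \<or> malg_iso S f E_car E_op \<or>
     (\<exists>n::nat. n \<ge> 1 \<and> (malg_iso S f {0..<n} (cyc_op n) \<or> malg_iso S f (hat_car n) (hat_op n)))"

definition in_S1 :: "'a set \<Rightarrow> ('a \<Rightarrow> 'a) \<Rightarrow> bool" where
  "in_S1 S f \<longleftrightarrow> in_Ustar_c S f \<and>
     (\<exists>a\<in>S. prime_part S f = {a} \<and> in_S0 (S - Pset S f a) f)"

end

theory Submission
  imports Defs
begin

primrec iter_choice :: "('p \<Rightarrow> 'a) \<Rightarrow> ('p \<Rightarrow> 'p) \<Rightarrow> ('a \<Rightarrow> 'p \<Rightarrow> 'a) \<Rightarrow> nat \<Rightarrow> 'p \<Rightarrow> 'a" where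
  "iter_choice base F stp 0 p = base p"
| "iter_choice base F stp (Suc n) p = stp (iter_choice base F stp n (F p)) p"

locale L45 =
  fixes A :: "'a set" and f :: "'a \<Rightarrow> 'a" and a :: 'a
  assumes malg: "is_malg A f"
    and conn: "connected_malg A f"
    and aA: "a \<in> A"
    and pp: "prime_part A f = {a}"
    and acyc: "\<not> has_cycle A f"
begin

lemma fA: "x \<in> A \<Longrightarrow> f x \<in> A"
  using malg unfolding is_malg_def by auto

lemma fnA: "x \<in> A \<Longrightarrow> (f^^n) x \<in> A"
  by (induction n) (auto simp: fA)

lemma fn_add: "(f^^m) ((f^^n) x) = (f^^(m+n)) x"
  by (simp add: funpow_add)

lemma acyc_eq: assumes "x \<in> A" "(f^^m) x = (f^^n) x" shows "m = n"
proof (rule ccontr)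
  assume ne: "m \<noteq> n"
  { fix m n assume lt: "m < n" and eq: "(f^^m) x = (f^^n) x"
    define y where "y = (f^^m) x"
    have yA: "y \<in> A" using assms(1) fnA y_def by auto
    have "(f^^(n-m)) y = (f^^n) x" using lt by (simp add: y_def fn_add)
    then have "(f^^(n-m)) y = y" using eq y_def by simp
    then have "has_cycle A f" unfolding has_cycle_def using yA lt
      by (intro bexI[of _ y] exI[of _ "n-m"]) auto
    with acyc have False by simp }
  then show False using ne assms(2) by (metis linorder_neqE_nat)
qed

definition lev :: "'a \<Rightarrow> int" where
  "lev x = (SOME d. \<exists>m n. (f^^m) x = (f^^n) (f a) \<and> d = int n - int m)"

lemma lev_eq: assumes "x \<in> A" "(f^^m) x = (f^^n) (f a)" shows "lev x = int n - int m"
proof -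
  have key: "int n' - int m' = int n - int m" if "(f^^m') x = (f^^n') (f a)" for m' n'
  proof -
    have "(f^^(m'+m)) x = (f^^(m+n')) (f a)"
      using that by (metis add.commute fn_add)
    moreover have "(f^^(m+m')) x = (f^^(m'+n)) (f a)"
      using assms(2) by (metis add.commute fn_add)
    ultimately have "(f^^(m+n')) (f a) = (f^^(m'+n)) (f a)" by (simp add: add.commute)
    then have "m+n' = m'+n" using acyc_eq[of "f a"] fA aA by blast
    then show ?thesis by simp
  qed
  have "\<exists>d. \<exists>m n. (f^^m) x = (f^^n) (f a) \<and> d = int n - int m" using assms by blast
  then have "\<exists>m' n'. (f^^m') x = (f^^n') (f a) \<and> lev x = int n' - int m'"
    unfolding lev_def by (rule someI_ex)
  then show ?thesis using key by auto
qed

lemma lev_ex: assumes "x \<in> A" shows "\<exists>m n. (f^^m) x = (f^^n) (f a)"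
  using conn assms aA fA unfolding connected_malg_def by blast

lemma lev_f: assumes "x \<in> A" shows "lev (f x) = lev x + 1"
proof -
  obtain m n where mn: "(f^^m) x = (f^^n) (f a)" using lev_ex assms by blast
  have "(f^^m) (f x) = (f^^(Suc n)) (f a)" using mn by (metis funpow_Suc_right funpow_swap1 o_apply)
  then have "lev (f x) = int (Suc n) - int m" using lev_eq fA assms by blast
  moreover have "lev x = int n - int m" using lev_eq assms mn by blast
  ultimately show ?thesis by simp
qed

lemma lev_fn: assumes "x \<in> A" shows "lev ((f^^k) x) = lev x + int k"
  using assms by (induction k) (auto simp: lev_f fnA)

lemma lev_meet: assumes "x \<in> A" "y \<in> A" "(f^^m) x = (f^^n) y" shows "lev x + int m = lev y + int n"
  using lev_fn assms by metis

lemma same_lev: assumes "x \<in> A" "y \<in> A" "lev x = lev y" shows "\<exists>k. (f^^k) x = (f^^k) y"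
proof -
  obtain m n where "(f^^m) x = (f^^n) y" using conn assms unfolding connected_malg_def by blast
  moreover then have "m = n" using lev_meet assms by force
  ultimately show ?thesis by blast
qed

end
context L45 begin
abbreviation "IP \<equiv> inf_part A f"
abbreviation "Pa \<equiv> Pset A f a"

lemma IP_A: "x \<in> IP \<Longrightarrow> x \<in> A" unfolding inf_part_def by auto

lemma IP_f: assumes "x \<in> IP" shows "f x \<in> IP"
proof -
  obtain s where s: "s 0 = x" "\<forall>n. s n \<in> A \<and> f (s (Suc n)) = s n" using assms unfolding inf_part_def by auto
  define t where "t n = (if n = 0 then f x else s (n - 1))" for n
  have xA: "x \<in> A" using s by metis
  have "t 0 = f x" by (simp add: t_def)
  moreover have "\<forall>n. t n \<in> A \<and> f (t (Suc n)) = t n"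
  proof
    fix n show "t n \<in> A \<and> f (t (Suc n)) = t n"
      using s xA fA by (cases n) (auto simp: t_def)
  qed
  ultimately have "t 0 = f x" "\<forall>n. t n \<in> A \<and> f (t (Suc n)) = t n" by auto
  then show ?thesis unfolding inf_part_def using fA IP_A assms by blast
qed

lemma IP_fn: "x \<in> IP \<Longrightarrow> (f^^n) x \<in> IP"
  by (induction n) (auto simp: IP_f)

lemma IP_seq: assumes "x \<in> IP" obtains s where "s 0 = x" "\<forall>n. s n \<in> IP \<and> f (s (Suc n)) = s n"
proof -
  obtain s where s: "s 0 = x" "\<forall>n. s n \<in> A \<and> f (s (Suc n)) = s n" using assms unfolding inf_part_def by auto
  have "s n \<in> IP" for n
  proof -
    have "(\<lambda>j. s (n + j)) 0 = s n" "\<forall>j. (\<lambda>j. s (n + j)) j \<in> A \<and> f ((\<lambda>j. s (n + j)) (Suc j)) = (\<lambda>j. s (n + j)) j"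
      using s by auto
    then show ?thesis unfolding inf_part_def using s by (auto intro!: exI[of _ "\<lambda>j. s (n + j)"])
  qed
  then show ?thesis using that s by blast
qed

lemma IP_child: assumes "x \<in> IP" shows "\<exists>c. c \<in> IP \<and> f c = x"
  using IP_seq[OF assms] by metis

lemma a_notIP: "a \<notin> IP" and fa_IP: "f a \<in> IP"
  using pp unfolding prime_part_def by auto

lemma Pa_A: "y \<in> Pa \<Longrightarrow> y \<in> A" unfolding Pset_def by auto

lemma a_Pa: "a \<in> Pa" unfolding Pset_def using aA by (auto intro: exI[of _ 0])

lemma IP_Pa_disj: "x \<in> IP \<Longrightarrow> x \<in> Pa \<Longrightarrow> False"
  unfolding Pset_def using IP_fn a_notIP by blast

lemma A_split: assumes "x \<in> A" "x \<notin> IP" shows "x \<in> Pa"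
proof -
  obtain m n where "(f^^m) x = (f^^n) (f a)" using lev_ex assms by blast
  then have ex: "\<exists>k. (f^^k) x \<in> IP" using IP_fn fa_IP by metis
  define k where "k = (LEAST k. (f^^k) x \<in> IP)"
  have k1: "(f^^k) x \<in> IP" unfolding k_def using ex by (rule LeastI_ex)
  have k0: "k \<noteq> 0"
  proof
    assume "k = 0" then show False using k1 assms by simp
  qed
  then obtain j where j: "k = Suc j" by (cases k) auto
  have "(f^^j) x \<notin> IP" using not_less_Least[of j "\<lambda>k. (f^^k) x \<in> IP"] j k_def by auto
  moreover have "f ((f^^j) x) \<in> IP" using k1 j by simp
  ultimately have "(f^^j) x \<in> prime_part A f" unfolding prime_part_def using fnA assms by auto
  then have "(f^^j) x = a" using pp by auto
  then show ?thesis unfolding Pset_def using assms by auto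
qed

lemma Pa_child: assumes "y \<in> Pa" "c \<in> A" "f c = y" shows "c \<in> Pa"
proof -
  obtain n where "(f^^n) y = a" using assms unfolding Pset_def by auto
  then have "(f^^(Suc n)) c = a" using assms by (simp add: funpow_swap1)
  then show ?thesis unfolding Pset_def using assms by blast
qed

lemma Pa_f: assumes "y \<in> Pa" "y \<noteq> a" shows "f y \<in> Pa"
proof -
  obtain n where n: "(f^^n) y = a" "y \<in> A" using assms unfolding Pset_def by auto
  then obtain j where "n = Suc j" using assms by (cases n) auto
  then have "(f^^j) (f y) = a" using n by (simp add: funpow_swap1)
  then show ?thesis unfolding Pset_def using fA n by auto
qed

end
context L45 begin
definition dep :: "'a \<Rightarrow> nat" where "dep y = (THE n. (f^^n) y = a)"

lemma dep: assumes "y \<in> Pa" shows "(f^^(dep y)) y = a"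
proof -
  obtain n where n: "(f^^n) y = a" "y \<in> A" using assms unfolding Pset_def by auto
  have u: "(f^^m) y = a \<Longrightarrow> m = n" for m using n acyc_eq[of y m n] by metis
  have "dep y = n" unfolding dep_def
    using n u by (intro the_equality) blast+
  then show ?thesis using n by simp
qed

lemma dep_unique: assumes "y \<in> Pa" "(f^^n) y = a" shows "dep y = n"
proof -
  have "(f^^(dep y)) y = (f^^n) y" using dep[OF assms(1)] assms(2) by simp
  then show ?thesis using acyc_eq Pa_A assms(1) by blast
qed

lemma dep_f: assumes "y \<in> Pa" "dep y = Suc n" shows "dep (f y) = n" "f y \<in> Pa"
proof -
  have d: "(f^^(Suc n)) y = a" using dep[OF assms(1)] assms(2) by simp
  then have h1: "(f^^n) (f y) = a" by (simp only: funpow_Suc_right o_apply)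
  have "y \<in> A" using assms(1) Pa_A by blast
  then have "f y \<in> A" using fA by blast
  with h1 show fy: "f y \<in> Pa" unfolding Pset_def by blast
  show "dep (f y) = n" using dep_unique[OF fy h1] .
qed

lemma dep0: "y \<in> Pa \<Longrightarrow> dep y = 0 \<longleftrightarrow> y = a"
proof
  assume "y \<in> Pa" "dep y = 0" then show "y = a" using dep by force
next
  assume "y = a" then show "dep y = 0" using dep_unique[of a 0] a_Pa by simp
qed

definition sq :: "nat \<Rightarrow> 'a" where
  "sq = (SOME s. s 0 = f a \<and> (\<forall>n. s n \<in> IP \<and> f (s (Suc n)) = s n))"

lemma sq: "sq 0 = f a" "sq n \<in> IP" "f (sq (Suc n)) = sq n"
proof -
  have "\<exists>s. s 0 = f a \<and> (\<forall>n. s n \<in> IP \<and> f (s (Suc n)) = s n)"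
    using IP_seq[OF fa_IP] by metis
  then have "sq 0 = f a \<and> (\<forall>n. sq n \<in> IP \<and> f (sq (Suc n)) = sq n)"
    unfolding sq_def by (rule someI_ex)
  then show "sq 0 = f a" "sq n \<in> IP" "f (sq (Suc n)) = sq n" by auto
qed

definition Ln :: "int \<Rightarrow> 'a" where
  "Ln k = (if 0 \<le> k then (f^^(nat k)) (f a) else sq (nat (-k)))"

lemma Ln_IP: "Ln k \<in> IP"
  unfolding Ln_def using sq IP_fn fa_IP by auto

lemma Ln_A: "Ln k \<in> A" using Ln_IP IP_A by auto

lemma Ln_f: "f (Ln k) = Ln (k + 1)"
proof (cases "0 \<le> k")
  case True
  have "nat (k+1) = Suc (nat k)" using True by simp
  then show ?thesis unfolding Ln_def using True by simp
next
  case False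
  show ?thesis
  proof (cases "k = -1")
    case True then show ?thesis unfolding Ln_def using sq by simp
  next
    case False
    then have "nat (-k) = Suc (nat (-(k+1)))" using \<open>\<not> 0 \<le> k\<close> by simp
    then show ?thesis unfolding Ln_def using sq \<open>\<not> 0 \<le> k\<close> False by simp
  qed
qed

lemma lev_fa: "lev (f a) = 0" using lev_eq[of "f a" 0 0] fA aA by simp

lemma lev_Ln: "lev (Ln k) = k"
proof (cases "0 \<le> k")
  case True
  then show ?thesis unfolding Ln_def using lev_fn[of "f a" "nat k"] fA aA lev_fa by simp
next
  case False
  define j where "j = nat (-k)"
  have sqA: "sq n \<in> A" for n using sq(2) IP_A by blast
  have "(f^^n) (sq n) = f a" for n
    by (induction n) (simp_all add: sq funpow_swap1)
  then have "lev (f a) = lev (sq j) + int j" using lev_fn[OF sqA, of j j] by simp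
  then have "lev (sq j) = - int j" using lev_fa by simp
  moreover have "int j = - k" using False j_def by simp
  ultimately show ?thesis unfolding Ln_def using False j_def by simp
qed

lemma Ln_inj: "Ln k = Ln j \<Longrightarrow> k = j" using lev_Ln by metis

lemma IP_eq_same_lev: assumes "x \<in> IP" "y \<in> IP" "lev x = lev y"
  and uniq: "\<forall>z\<in>IP. \<forall>c1\<in>IP. \<forall>c2\<in>IP. f c1 = z \<and> f c2 = z \<longrightarrow> c1 = c2"
  shows "x = y"
proof -
  obtain k where k: "(f^^k) x = (f^^k) y" using same_lev assms IP_A by blast
  have "\<forall>x y. x \<in> IP \<longrightarrow> y \<in> IP \<longrightarrow> (f^^k) x = (f^^k) y \<longrightarrow> x = y" for k
  proof (induction k)
    case 0 show ?case by simp
  next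
    case (Suc k) show ?case
    proof (intro allI impI)
      fix x y assume xy: "x \<in> IP" "y \<in> IP" "(f^^Suc k) x = (f^^Suc k) y"
      then have "(f^^k) (f x) = (f^^k) (f y)" by (simp only: funpow_Suc_right o_apply)
      then have "f x = f y" using Suc.IH IP_f xy by blast
      then show "x = y" using uniq IP_f xy by blast
    qed
  qed
  then show ?thesis using k assms by blast
qed

end
context L45 begin

definition bsim :: "('a \<Rightarrow> 'a \<Rightarrow> bool) \<Rightarrow> bool" where
  "bsim R \<longleftrightarrow> (\<forall>x y. R x y \<longrightarrow>
     (\<forall>c. c \<in> A \<and> f c = x \<longrightarrow> (\<exists>d. d \<in> A \<and> f d = y \<and> R c d)) \<and>
     (\<forall>d. d \<in> A \<and> f d = y \<longrightarrow> (\<exists>c. c \<in> A \<and> f c = x \<and> R c d)))"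

definition beq :: "'a \<Rightarrow> 'a \<Rightarrow> bool" where
  "beq x y \<longleftrightarrow> (\<exists>R. bsim R \<and> R x y)"

lemma beq_refl: "beq x x"
proof -
  have "bsim (=)" unfolding bsim_def by blast
  then show ?thesis unfolding beq_def by blast
qed

lemma beq_sym: assumes "beq x y" shows "beq y x"
proof -
  obtain R where R: "bsim R" "R x y" using assms unfolding beq_def by blast
  have "bsim (\<lambda>u v. R v u)" using R(1) unfolding bsim_def by blast
  then show ?thesis using R(2) unfolding beq_def by blast
qed

lemma beq_trans: assumes "beq x y" "beq y z" shows "beq x z"
proof -
  obtain R where R: "bsim R" "R x y" using assms unfolding beq_def by blast
  obtain S where S: "bsim S" "S y z" using assms unfolding beq_def by blast
  have "bsim (\<lambda>u w. \<exists>v. R u v \<and> S v w)" unfolding bsim_def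
  proof (intro allI impI)
    fix u w assume "\<exists>v. R u v \<and> S v w"
    then obtain v where v: "R u v" "S v w" by blast
    have c1: "\<forall>c. c \<in> A \<and> f c = u \<longrightarrow> (\<exists>d. d \<in> A \<and> f d = w \<and> (\<exists>v. R c v \<and> S v d))"
    proof (intro allI impI)
      fix c assume c: "c \<in> A \<and> f c = u"
      then obtain d where d: "d \<in> A" "f d = v" "R c d" using R(1) v(1) unfolding bsim_def by blast
      then obtain e where "e \<in> A" "f e = w" "S d e" using S(1) v(2) unfolding bsim_def by blast
      then show "\<exists>d. d \<in> A \<and> f d = w \<and> (\<exists>v. R c v \<and> S v d)" using d by blast
    qed
    have c2: "\<forall>d. d \<in> A \<and> f d = w \<longrightarrow> (\<exists>c. c \<in> A \<and> f c = u \<and> (\<exists>v. R c v \<and> S v d))"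
    proof (intro allI impI)
      fix e assume e: "e \<in> A \<and> f e = w"
      then obtain d where d: "d \<in> A" "f d = v" "S d e" using S(1) v(2) unfolding bsim_def by blast
      then obtain c where "c \<in> A" "f c = u" "R c d" using R(1) v(1) unfolding bsim_def by blast
      then show "\<exists>c. c \<in> A \<and> f c = u \<and> (\<exists>v. R c v \<and> S v e)" using d by blast
    qed
    show "(\<forall>c. c \<in> A \<and> f c = u \<longrightarrow> (\<exists>d. d \<in> A \<and> f d = w \<and> (\<exists>v. R c v \<and> S v d))) \<and>
      (\<forall>d. d \<in> A \<and> f d = w \<longrightarrow> (\<exists>c. c \<in> A \<and> f c = u \<and> (\<exists>v. R c v \<and> S v d)))"
      using c1 c2 by blast
  qed
  then show ?thesis using R(2) S(2) unfolding beq_def by blast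
qed

lemma beq_child1: assumes "beq x y" "c \<in> A" "f c = x" shows "\<exists>d. d \<in> A \<and> f d = y \<and> beq c d"
proof -
  obtain R where R: "bsim R" "R x y" using assms unfolding beq_def by blast
  then obtain d where "d \<in> A" "f d = y" "R c d" using assms unfolding bsim_def by blast
  then show ?thesis using R(1) unfolding beq_def by blast
qed

lemma beq_child2: assumes "beq x y" "d \<in> A" "f d = y" shows "\<exists>c. c \<in> A \<and> f c = x \<and> beq c d"
proof -
  obtain R where R: "bsim R" "R x y" using assms unfolding beq_def by blast
  then obtain c where "c \<in> A" "f c = x" "R c d" using assms unfolding bsim_def by blast
  then show ?thesis using R(1) unfolding beq_def by blast
qed

definition rep :: "'a \<Rightarrow> 'a \<Rightarrow> 'a" where
  "rep z c = (SOME c'. c' \<in> A \<and> f c' = z \<and> beq c' c)"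

lemma rep_cong: assumes "beq c1 c2" shows "rep z c1 = rep z c2"
proof -
  have "(\<lambda>c'. c' \<in> A \<and> f c' = z \<and> beq c' c1) = (\<lambda>c'. c' \<in> A \<and> f c' = z \<and> beq c' c2)"
    using assms beq_trans beq_sym by blast
  then show ?thesis unfolding rep_def by simp
qed

lemma rep_spec: assumes "\<exists>c'. c' \<in> A \<and> f c' = z \<and> beq c' c"
  shows "rep z c \<in> A" "f (rep z c) = z" "beq (rep z c) c"
proof -
  have "rep z c \<in> A \<and> f (rep z c) = z \<and> beq (rep z c) c"
    unfolding rep_def using assms by (rule someI_ex)
  then show "rep z c \<in> A" "f (rep z c) = z" "beq (rep z c) c" by auto
qed

definition isrep :: "'a \<Rightarrow> bool" where "isrep c \<longleftrightarrow> rep (f c) c = c"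

definition T :: "'a set" where
  "T = {y \<in> Pa. \<forall>k. (f^^k) y \<in> Pa \<and> (f^^k) y \<noteq> a \<longrightarrow> isrep ((f^^k) y)}"

lemma T_Pa: "y \<in> T \<Longrightarrow> y \<in> Pa" unfolding T_def by blast

lemma T_A: "y \<in> T \<Longrightarrow> y \<in> A" using T_Pa Pa_A by blast

lemma a_T: "a \<in> T"
proof -
  have "(f^^k) a \<in> Pa \<Longrightarrow> (f^^k) a = a" for k
  proof (cases k)
    case (Suc j)
    assume "(f^^k) a \<in> Pa"
    moreover have "(f^^k) a \<in> IP" using Suc IP_fn[OF fa_IP, of j] by (simp add: funpow_swap1)
    ultimately show ?thesis using IP_Pa_disj by blast
  qed simp
  then show ?thesis unfolding T_def using a_Pa by blast
qed

lemma T_isrep: "y \<in> T \<Longrightarrow> y \<noteq> a \<Longrightarrow> isrep y"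
proof -
  assume "y \<in> T" "y \<noteq> a"
  then have "y \<in> Pa" "\<forall>k. (f^^k) y \<in> Pa \<and> (f^^k) y \<noteq> a \<longrightarrow> isrep ((f^^k) y)" unfolding T_def by auto
  from this(2)[rule_format, of 0] show "isrep y" using \<open>y \<in> Pa\<close> \<open>y \<noteq> a\<close> by simp
qed

lemma T_f: assumes "y \<in> T" "y \<noteq> a" shows "f y \<in> T"
proof -
  have "f y \<in> Pa" using Pa_f T_Pa assms by blast
  moreover have "(f^^k) (f y) = (f^^(Suc k)) y" for k by (simp add: funpow_swap1)
  moreover have H: "\<forall>k. (f^^k) y \<in> Pa \<and> (f^^k) y \<noteq> a \<longrightarrow> isrep ((f^^k) y)" using assms(1) unfolding T_def by blast
  have "\<forall>k. (f^^k) (f y) \<in> Pa \<and> (f^^k) (f y) \<noteq> a \<longrightarrow> isrep ((f^^k) (f y))"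
  proof (intro allI impI)
    fix k assume "(f^^k) (f y) \<in> Pa \<and> (f^^k) (f y) \<noteq> a"
    moreover have eq: "(f^^(Suc k)) y = (f^^k) (f y)" by (simp only: funpow_Suc_right o_apply)
    ultimately have "(f^^(Suc k)) y \<in> Pa \<and> (f^^(Suc k)) y \<noteq> a" by simp
    then have "isrep ((f^^(Suc k)) y)" using H by blast
    then show "isrep ((f^^k) (f y))" using eq by simp
  qed
  ultimately show ?thesis unfolding T_def by blast
qed

lemma rep_T: assumes "t \<in> T" "c \<in> A" "f c = t"
  shows "rep t c \<in> T" "f (rep t c) = t" "beq (rep t c) c" "rep t c \<in> A"
proof -
  have ex: "\<exists>c'. c' \<in> A \<and> f c' = t \<and> beq c' c" using assms beq_refl by blast
  note rs = rep_spec[OF ex]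
  show "f (rep t c) = t" "beq (rep t c) c" "rep t c \<in> A" using rs by auto
  define c' where "c' = rep t c"
  have c'Pa: "c' \<in> Pa" using Pa_child[of t c'] rs T_Pa assms(1) c'_def by blast
  have ir: "isrep c'" unfolding isrep_def c'_def using rs rep_cong by metis
  have "isrep ((f^^k) c')" if "(f^^k) c' \<in> Pa" "(f^^k) c' \<noteq> a" for k
  proof (cases k)
    case 0 then show ?thesis using ir by simp
  next
    case (Suc j)
    then have "(f^^k) c' = (f^^j) t" using rs c'_def by (simp add: funpow_swap1)
    then show ?thesis using assms(1) that unfolding T_def by auto
  qed
  then show "rep t c \<in> T" unfolding T_def using c'Pa c'_def by blast
qed

end
context L45 begin

definition rr :: "nat \<Rightarrow> 'a \<Rightarrow> 'a" where "rr = iter_choice (\<lambda>_. a) f rep"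

lemma rr_0: "rr 0 y = a" unfolding rr_def by simp
lemma rr_Suc: "rr (Suc n) y = rep (rr n (f y)) y" unfolding rr_def by simp

lemma rr_inv: "y \<in> Pa \<Longrightarrow> dep y = n \<Longrightarrow> rr n y \<in> T \<and> beq (rr n y) y"
proof (induction n arbitrary: y)
  case 0
  then have "y = a" using dep0 by blast
  then show ?case using rr_0 a_T beq_refl by simp
next
  case (Suc n)
  have fy: "f y \<in> Pa" "dep (f y) = n" using dep_f Suc.prems by blast+
  then have IH: "rr n (f y) \<in> T" "beq (rr n (f y)) (f y)" using Suc.IH by blast+
  have yA: "y \<in> A" using Suc.prems Pa_A by blast
  obtain c where c: "c \<in> A" "f c = rr n (f y)" "beq c y" using beq_child2[OF IH(2) yA] by blast
  have "rep (rr n (f y)) y = rep (rr n (f y)) c" using rep_cong beq_sym c(3) by metis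
  then show ?case using rep_T[OF IH(1) c(1,2)] c(3) rr_Suc beq_trans by metis
qed

lemma rr_f: assumes "y \<in> Pa" "dep y = Suc n" shows "f (rr (Suc n) y) = rr n (f y)"
proof -
  have fy: "f y \<in> Pa" "dep (f y) = n" using dep_f assms by blast+
  then have IH: "rr n (f y) \<in> T" "beq (rr n (f y)) (f y)" using rr_inv by blast+
  have yA: "y \<in> A" using assms Pa_A by blast
  obtain c where c: "c \<in> A" "f c = rr n (f y)" "beq c y" using beq_child2[OF IH(2) yA] by blast
  then have "f (rep (rr n (f y)) y) = rr n (f y)" using rep_spec(2)[of "rr n (f y)" y] by blast
  then show ?thesis by (simp add: rr_Suc)
qed

lemma rr_T: "y \<in> T \<Longrightarrow> dep y = n \<Longrightarrow> rr n y = y"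
proof (induction n arbitrary: y)
  case 0
  then show ?case using dep0 T_Pa rr_0 by metis
next
  case (Suc n)
  have yPa: "y \<in> Pa" using Suc.prems T_Pa by blast
  have ya: "y \<noteq> a" using Suc.prems dep0 yPa by force
  have "f y \<in> T" using T_f Suc.prems ya by blast
  moreover have "dep (f y) = n" using dep_f yPa Suc.prems by blast
  ultimately have "rr n (f y) = f y" using Suc.IH by blast
  then show ?case using rr_Suc T_isrep[OF Suc.prems(1) ya] unfolding isrep_def by simp
qed

definition rmap :: "'a \<Rightarrow> 'a" where
  "rmap x = (if x \<in> IP then Ln (lev x) else rr (dep x) x)"

definition Bs :: "'a set" where "Bs = range Ln \<union> T"

lemma Bs_A: "x \<in> Bs \<Longrightarrow> x \<in> A" unfolding Bs_def using Ln_A T_A by blast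

lemma Bs_f: assumes "x \<in> Bs" shows "f x \<in> Bs"
proof (cases "x \<in> T")
  case True
  show ?thesis
  proof (cases "x = a")
    case True
    have "f a = Ln 0"
    proof -
      have "Ln 0 = (f^^0) (f a)" unfolding Ln_def by simp
      then show ?thesis by simp
    qed
    then show ?thesis using True unfolding Bs_def by auto
  next
    case False
    then show ?thesis using T_f \<open>x \<in> T\<close> unfolding Bs_def by blast
  qed
next
  case False
  then obtain k where "x = Ln k" using assms unfolding Bs_def by blast
  then show ?thesis using Ln_f unfolding Bs_def by auto
qed

lemma fa_Ln: "f a = Ln 0" unfolding Ln_def by simp

lemma rmap_B: assumes "x \<in> A" shows "rmap x \<in> Bs"
proof (cases "x \<in> IP")
  case True then show ?thesis unfolding rmap_def Bs_def by auto
next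
  case False
  then have "x \<in> Pa" using A_split assms by blast
  then show ?thesis unfolding rmap_def Bs_def using False rr_inv by auto
qed

lemma rmap_beq: assumes "x \<in> Pa" shows "beq (rmap x) x"
proof -
  have "x \<notin> IP" using assms IP_Pa_disj by blast
  then show ?thesis unfolding rmap_def using rr_inv assms by auto
qed

lemma rmap_id: assumes "x \<in> Bs" shows "rmap x = x"
proof (cases "x \<in> T")
  case True
  then have "x \<notin> IP" using T_Pa IP_Pa_disj by blast
  then show ?thesis unfolding rmap_def using rr_T True by simp
next
  case False
  then obtain k where "x = Ln k" using assms unfolding Bs_def by blast
  then show ?thesis unfolding rmap_def using Ln_IP lev_Ln by simp
qed

lemma rmap_hom: assumes "x \<in> A" shows "rmap (f x) = f (rmap x)"
proof (cases "x \<in> IP")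
  case True
  then have "f x \<in> IP" using IP_f by blast
  then show ?thesis unfolding rmap_def using True lev_f assms Ln_f by simp
next
  case False
  then have xPa: "x \<in> Pa" using A_split assms by blast
  show ?thesis
  proof (cases "x = a")
    case True
    have "rmap a = a" using rmap_id a_T unfolding Bs_def by blast
    moreover have "rmap (f a) = f a" using rmap_id fa_Ln unfolding Bs_def by auto
    ultimately show ?thesis using True by simp
  next
    case False
    then obtain n where n: "dep x = Suc n" using dep0 xPa by (cases "dep x") auto
    have fx: "f x \<in> Pa" "dep (f x) = n" using dep_f xPa n by blast+
    have "f x \<notin> IP" using fx IP_Pa_disj by blast
    then have "rmap (f x) = rr n (f x)" unfolding rmap_def using fx by simp
    moreover have "rmap x = rr (Suc n) x" unfolding rmap_def using \<open>x \<notin> IP\<close> n by simp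
    ultimately show ?thesis using rr_f xPa n by simp
  qed
qed

end
context L45 begin

lemma Ln_notT: "Ln k \<notin> T" using Ln_IP T_Pa IP_Pa_disj by blast

lemma Pset_Bs_T: assumes "x \<in> T" shows "Pset Bs f x \<subseteq> T"
proof
  fix y assume "y \<in> Pset Bs f x"
  then obtain n where y: "y \<in> Bs" "(f^^n) y = x" unfolding Pset_def by blast
  obtain m where m: "(f^^m) x = a" using assms T_Pa unfolding Pset_def by blast
  have "(f^^(m+n)) y = a" using y m by (simp add: funpow_add)
  then have "y \<in> Pa" using Bs_A y(1) unfolding Pset_def by blast
  then show "y \<in> T" using y(1) IP_Pa_disj Ln_IP unfolding Bs_def by blast
qed

lemma Pset_Bs_child: assumes "y \<in> Pset Bs f x" "c \<in> Bs" "f c = y" shows "c \<in> Pset Bs f x"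
proof -
  obtain n where "(f^^n) y = x" using assms unfolding Pset_def by blast
  then have "(f^^(Suc n)) c = x" using assms by (simp only: funpow_Suc_right o_apply)
  then show ?thesis using assms unfolding Pset_def by blast
qed

lemma Pset_root: assumes "x \<in> A" shows "f x \<notin> Pset S f x"
proof
  assume "f x \<in> Pset S f x"
  then obtain n where "(f^^n) (f x) = x" unfolding Pset_def by blast
  then have "(f^^(Suc n)) x = (f^^0) x" by (simp only: funpow_Suc_right o_apply funpow_0)
  then show False using acyc_eq assms by blast
qed

lemma Pset_nonroot: assumes "y \<in> Pset S f x" "y \<noteq> x" "\<forall>u\<in>S. f u \<in> S" shows "f y \<in> Pset S f x"
proof -
  obtain n where n: "(f^^n) y = x" "y \<in> S" using assms unfolding Pset_def by blast
  then obtain m where "n = Suc m" using assms by (cases n) auto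
  then have "(f^^m) (f y) = x" using n by (simp only: funpow_Suc_right o_apply)
  then show ?thesis using n assms(3) unfolding Pset_def by blast
qed

lemma Bs_closed: "\<forall>u\<in>Bs. f u \<in> Bs" using Bs_f by blast

lemma self_Pset: "x \<in> S \<Longrightarrow> x \<in> Pset S f x" unfolding Pset_def by (auto intro: exI[of _ 0])

lemma iso_beq: assumes xi: "xi \<in> T" and xj: "xj \<in> T"
  and iso: "partial_iso (Pset Bs f xi) (Pset Bs f xj) f"
  shows "beq xi xj"
proof -
  define P1 where "P1 = Pset Bs f xi"
  define P2 where "P2 = Pset Bs f xj"
  obtain h where hb: "bij_betw h P1 P2"
    and hp: "\<forall>y\<in>P1. (f y \<in> P1 \<longleftrightarrow> f (h y) \<in> P2) \<and> (f y \<in> P1 \<longrightarrow> h (f y) = f (h y))"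
    using iso unfolding partial_iso_def P1_def P2_def by blast
  have P1T: "P1 \<subseteq> T" using Pset_Bs_T xi P1_def by blast
  have P2T: "P2 \<subseteq> T" using Pset_Bs_T xj P2_def by blast
  have xiB: "xi \<in> Bs" and xjB: "xj \<in> Bs" using xi xj unfolding Bs_def by auto
  have xiP: "xi \<in> P1" using self_Pset xiB P1_def by blast
  have xjP: "xj \<in> P2" using self_Pset xjB P2_def by blast
  have hxi: "h xi = xj"
  proof -
    obtain y0 where y0: "y0 \<in> P1" "h y0 = xj" using hb xjP unfolding bij_betw_def by blast
    have "f xj \<notin> P2" using Pset_root T_A xj P2_def by blast
    then have "f y0 \<notin> P1" using hp y0 by blast
    then have "y0 = xi" using Pset_nonroot[OF _ _ Bs_closed] y0(1) P1_def by blast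
    then show ?thesis using y0 by simp
  qed
  define R where "R u v \<longleftrightarrow> (\<exists>y\<in>P1. beq u y \<and> beq (h y) v)" for u v
  have "bsim R" unfolding bsim_def
  proof (intro allI impI)
    fix u v assume "R u v"
    then obtain y where y: "y \<in> P1" "beq u y" "beq (h y) v" unfolding R_def by blast
    have yT: "y \<in> T" using y P1T by blast
    have hyT: "h y \<in> T" using y P2T hb unfolding bij_betw_def by blast
    have c1: "\<forall>c. c \<in> A \<and> f c = u \<longrightarrow> (\<exists>d. d \<in> A \<and> f d = v \<and> R c d)"
    proof (intro allI impI)
      fix c assume c: "c \<in> A \<and> f c = u"
      obtain c1 where c1: "c1 \<in> A" "f c1 = y" "beq c c1" using beq_child1[OF y(2)] c by blast
      define c2 where "c2 = rep y c1"
      have c2: "c2 \<in> T" "f c2 = y" "beq c2 c1" using rep_T[OF yT c1(1,2)] c2_def by auto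
      have c2P: "c2 \<in> P1" using Pset_Bs_child[of y xi c2] y(1) c2 unfolding P1_def Bs_def by blast
      have "h y = f (h c2)" using hp c2P c2(2) y(1) by metis
      moreover have "h c2 \<in> A" using c2P hb P2T T_A unfolding bij_betw_def by blast
      ultimately obtain d where d: "d \<in> A" "f d = v" "beq (h c2) d" using beq_child1[OF y(3)] by metis
      have "beq c c2" using c1(3) c2(3) beq_sym beq_trans by blast
      then have "R c d" unfolding R_def using c2P d(3) by blast
      then show "\<exists>d. d \<in> A \<and> f d = v \<and> R c d" using d by blast
    qed
    have c2: "\<forall>d. d \<in> A \<and> f d = v \<longrightarrow> (\<exists>c. c \<in> A \<and> f c = u \<and> R c d)"
    proof (intro allI impI)
      fix d assume d: "d \<in> A \<and> f d = v"
      obtain d1 where d1: "d1 \<in> A" "f d1 = h y" "beq d1 d" using beq_child2[OF y(3)] d by blast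
      define d2 where "d2 = rep (h y) d1"
      have d2: "d2 \<in> T" "f d2 = h y" "beq d2 d1" using rep_T[OF hyT d1(1,2)] d2_def by auto
      have hyP: "h y \<in> P2" using y(1) hb unfolding bij_betw_def by blast
      have d2P: "d2 \<in> P2" using Pset_Bs_child[of "h y" xj d2] hyP d2 unfolding P2_def Bs_def by blast
      obtain c2 where c2: "c2 \<in> P1" "h c2 = d2" using d2P hb unfolding bij_betw_def by blast
      have "f (h c2) \<in> P2" using c2 d2 hyP by simp
      then have fc2: "f c2 \<in> P1" "h (f c2) = f (h c2)" using hp c2(1) by blast+
      have "h (f c2) = h y" using fc2(2) c2(2) d2(2) by simp
      then have "f c2 = y" using hb fc2(1) y(1) unfolding bij_betw_def inj_on_def by blast
      moreover have "c2 \<in> A" using c2 P1T T_A by blast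
      ultimately obtain c where c: "c \<in> A" "f c = u" "beq c c2" using beq_child2[OF y(2)] by metis
      have "beq (h c2) d" using c2(2) d2(3) d1(3) beq_trans by blast
      then have "R c d" unfolding R_def using c2(1) c(3) by blast
      then show "\<exists>c. c \<in> A \<and> f c = u \<and> R c d" using c by blast
    qed
    show "(\<forall>c. c \<in> A \<and> f c = u \<longrightarrow> (\<exists>d. d \<in> A \<and> f d = v \<and> R c d)) \<and>
          (\<forall>d. d \<in> A \<and> f d = v \<longrightarrow> (\<exists>c. c \<in> A \<and> f c = u \<and> R c d))" using c1 c2 by blast
  qed
  moreover have "R xi xj" unfolding R_def using xiP hxi beq_refl by metis
  ultimately show ?thesis unfolding beq_def by blast
qed

lemma T_sib_eq: assumes xi: "xi \<in> T" and xj: "xj \<in> T" and fe: "f xi = f xj"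
  and iso: "partial_iso (Pset Bs f xi) (Pset Bs f xj) f"
  shows "xi = xj"
proof (cases "xi = a \<or> xj = a")
  case True
  have "f xi \<in> IP" using True fe fa_IP by auto
  then have "xi \<in> prime_part A f" "xj \<in> prime_part A f" unfolding prime_part_def
    using xi xj fe T_A T_Pa IP_Pa_disj by auto
  then show ?thesis using pp by simp
next
  case False
  have "beq xi xj" using iso_beq assms by blast
  then have "rep (f xi) xi = rep (f xi) xj" using rep_cong by blast
  moreover have "rep (f xi) xi = xi" using T_isrep[OF xi] False unfolding isrep_def by blast
  moreover have "rep (f xi) xj = xj" using T_isrep[OF xj] False fe unfolding isrep_def by simp
  ultimately show ?thesis by simp
qed

lemma Ln_sib_eq: assumes "x \<in> range Ln" "y \<in> range Ln" "f x = f y" shows "x = y"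
proof -
  obtain k j where kj: "x = Ln k" "y = Ln j" using assms by blast
  then have "Ln (k+1) = Ln (j+1)" using assms(3) Ln_f[of k] Ln_f[of j] by simp
  then have "k + 1 = j + 1" by (rule Ln_inj)
  then show ?thesis using kj by simp
qed

lemma card2: "card {u, v} \<le> 2"
  by (simp add: card_insert_if)

lemma card3: assumes "x = y \<or> x = z \<or> y = z" shows "card {x, y, z} \<le> 2"
proof -
  consider "x = y" | "x = z" | "y = z" using assms by blast
  then show ?thesis
  proof cases
    case 1 then have "{x,y,z} = {y,z}" by auto
    then show ?thesis using card2 by simp
  next
    case 2 then have "{x,y,z} = {y,z}" by auto
    then show ?thesis using card2 by simp
  next
    case 3 then have "{x,y,z} = {x,z}" by auto
    then show ?thesis using card2 by simp
  qed
qed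

lemma star_Bs: "star_cond Bs f"
  unfolding star_cond_def
proof (intro ballI impI)
  fix x1 x2 x3 assume xs: "x1 \<in> Bs" "x2 \<in> Bs" "x3 \<in> Bs"
  assume H: "f x1 = f x2 \<and> f x2 = f x3 \<and> partial_iso (Pset Bs f x1) (Pset Bs f x2) f \<and>
     partial_iso (Pset Bs f x1) (Pset Bs f x3) f \<and> partial_iso (Pset Bs f x2) (Pset Bs f x3) f"
  have c: "x \<in> range Ln" if "x \<in> Bs" "x \<notin> T" for x using that unfolding Bs_def by blast
  have pe: "x = y" if "x \<in> Bs" "y \<in> Bs" "f x = f y" "partial_iso (Pset Bs f x) (Pset Bs f y) f"
    "x \<in> T \<longleftrightarrow> y \<in> T" for x y
  proof (cases "x \<in> T")
    case True
    then have "y \<in> T" using that(5) by simp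
    then show ?thesis using T_sib_eq[OF True _ that(3) that(4)] by simp
  next
    case False
    then have "y \<notin> T" using that(5) by simp
    then have "y \<in> range Ln" using c that(2) by simp
    moreover have "x \<in> range Ln" using c that(1) False by simp
    ultimately show ?thesis using Ln_sib_eq that(3) by simp
  qed
  have h1: "f x1 = f x2" and h2: "f x2 = f x3" and h3: "partial_iso (Pset Bs f x1) (Pset Bs f x2) f"
    and h4: "partial_iso (Pset Bs f x1) (Pset Bs f x3) f" and h5: "partial_iso (Pset Bs f x2) (Pset Bs f x3) f"
    using H by simp_all
  have h6: "f x1 = f x3" using h1 h2 by (rule trans)
  show "card {x1, x2, x3} \<le> 2"
  proof (cases "x1 \<in> T \<longleftrightarrow> x2 \<in> T")
    case True
    then have "x1 = x2" using pe[OF xs(1) xs(2) h1 h3] by simp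
    then show ?thesis by (intro card3) simp
  next
    case F1: False
    show ?thesis
    proof (cases "x1 \<in> T \<longleftrightarrow> x3 \<in> T")
      case True
      then have "x1 = x3" using pe[OF xs(1) xs(3) h6 h4] by simp
      then show ?thesis by (intro card3) simp
    next
      case False
      then have "x2 \<in> T \<longleftrightarrow> x3 \<in> T" using F1 by auto
      then have "x2 = x3" using pe[OF xs(2) xs(3) h2 h5] by simp
      then show ?thesis by (intro card3) simp
    qed
  qed
qed

lemma Pset_Bs_a: "Pset Bs f a = T"
proof
  show "Pset Bs f a \<subseteq> T" using Pset_Bs_T a_T by blast
  show "T \<subseteq> Pset Bs f a"
  proof
    fix y assume "y \<in> T"
    then obtain n where "(f^^n) y = a" using T_Pa unfolding Pset_def by blast
    then show "y \<in> Pset Bs f a" using \<open>y \<in> T\<close> unfolding Pset_def Bs_def by blast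
  qed
qed

lemma Bs_minus: "Bs - Pset Bs f a = range Ln"
  using Pset_Bs_a Ln_notT unfolding Bs_def by blast

lemma Ln_iso_Z: "malg_iso (range Ln) f (UNIV :: int set) Z_op"
  unfolding malg_iso_def
proof (intro exI[of _ lev] conjI)
  have "inj_on lev (range Ln)" unfolding inj_on_def
  proof (intro ballI impI)
    fix x y assume "x \<in> range Ln" "y \<in> range Ln" "lev x = lev y"
    then obtain k j where "x = Ln k" "y = Ln j" "lev (Ln k) = lev (Ln j)" by blast
    then show "x = y" using lev_Ln by simp
  qed
  moreover have "lev ` range Ln = UNIV"
  proof -
    have "k \<in> lev ` range Ln" for k using lev_Ln[of k] by (metis rangeI image_eqI)
    then show ?thesis by blast
  qed
  ultimately show "bij_betw lev (range Ln) UNIV" unfolding bij_betw_def by blast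
  show "\<forall>x\<in>range Ln. lev (f x) = Z_op (lev x)" using lev_f Ln_A unfolding Z_op_def by auto
qed

lemma inf_Bs: "inf_part Bs f = range Ln"
proof
  show "inf_part Bs f \<subseteq> range Ln"
  proof
    fix x assume x: "x \<in> inf_part Bs f"
    then obtain s where s: "s 0 = x" "\<forall>n. s n \<in> Bs \<and> f (s (Suc n)) = s n" "x \<in> Bs"
      unfolding inf_part_def by blast
    have "\<forall>n. s n \<in> A \<and> f (s (Suc n)) = s n" using s(2) Bs_A by blast
    then have "x \<in> IP" unfolding inf_part_def using s(1) s(3) Bs_A by blast
    then show "x \<in> range Ln" using s(3) IP_Pa_disj T_Pa unfolding Bs_def by blast
  qed
  show "range Ln \<subseteq> inf_part Bs f"
  proof
    fix x assume "x \<in> range Ln"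
    then obtain k where k: "x = Ln k" by blast
    define s where "s n = Ln (k - int n)" for n
    have s1: "s 0 = x" unfolding s_def k by simp
    have s2: "s n \<in> Bs" for n unfolding s_def Bs_def by blast
    have s3: "f (s (Suc n)) = s n" for n unfolding s_def Ln_f by simp
    have xB: "x \<in> Bs" unfolding k Bs_def by blast
    show "x \<in> inf_part Bs f" unfolding inf_part_def using s1 s2 s3 xB by blast
  qed
qed

lemma prime_Bs: "prime_part Bs f = {a}"
proof
  show "prime_part Bs f \<subseteq> {a}"
  proof
    fix x assume "x \<in> prime_part Bs f"
    then have x0: "x \<in> Bs" "x \<notin> inf_part Bs f" "f x \<in> inf_part Bs f" unfolding prime_part_def by blast+
    then have x: "x \<in> Bs" "x \<notin> range Ln" "f x \<in> range Ln" unfolding inf_Bs by blast+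
    then have xT: "x \<in> T" unfolding Bs_def by blast
    then have "x \<in> A" "x \<notin> IP" using T_A T_Pa IP_Pa_disj by blast+
    moreover have "f x \<in> IP" using x(3) Ln_IP by auto
    ultimately have "x \<in> prime_part A f" unfolding prime_part_def by blast
    then show "x \<in> {a}" using pp by simp
  qed
  have "a \<in> Bs" unfolding Bs_def using a_T by blast
  moreover have "a \<notin> range Ln" using a_notIP Ln_IP by (metis imageE)
  moreover have "f a \<in> range Ln" using fa_Ln by simp
  ultimately show "{a} \<subseteq> prime_part Bs f" unfolding prime_part_def inf_Bs by simp
qed

lemma S1_Bs: "in_S1 Bs f"
  unfolding in_S1_def in_Ustar_c_def
proof (intro conjI)
  have aB: "a \<in> Bs" unfolding Bs_def using a_T by blast
  then show "is_malg Bs f" unfolding is_malg_def using Bs_f by blast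
  show "connected_malg Bs f" using conn Bs_A unfolding connected_malg_def by blast
  show "star_cond Bs f" by (rule star_Bs)
  have "in_S0 (Bs - Pset Bs f a) f" unfolding in_S0_def Bs_minus using Ln_iso_Z by (rule disjI1)
  then show "\<exists>a\<in>Bs. prime_part Bs f = {a} \<and> in_S0 (Bs - Pset Bs f a) f"
    using prime_Bs aB by blast
qed

end

lemma E_op_closed: assumes "y \<in> E_car" shows "E_op y \<in> E_car"
proof (cases y)
  case (Inl k) then show ?thesis unfolding E_car_def by simp
next
  case (Inr k)
  then have "k \<ge> 1" using assms unfolding E_car_def by auto
  then show ?thesis using Inr unfolding E_car_def by auto
qed

context L45 begin

definition sub :: "'a \<Rightarrow> 'a \<Rightarrow> bool" where "sub x1 x \<longleftrightarrow> (\<exists>k. (f^^k) x = x1)"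

definition ee :: "'a \<Rightarrow> 'a \<Rightarrow> int + nat" where
  "ee x1 x = (if sub x1 x then Inr (nat (lev (f x1) - lev x)) else Inl (lev x - lev (f x1)))"

lemma sub_lev: assumes "x \<in> A" "(f^^k) x = x1" "x1 \<in> A" shows "lev (f x1) - lev x = int k + 1"
  using lev_fn[OF assms(1), of k] assms lev_f by simp

lemma ee_E: assumes "x \<in> A" "x1 \<in> A" shows "ee x1 x \<in> E_car"
proof (cases "sub x1 x")
  case True
  then obtain k where "(f^^k) x = x1" unfolding sub_def by blast
  then have "lev (f x1) - lev x = int k + 1" using sub_lev assms by blast
  then have "nat (lev (f x1) - lev x) \<ge> 1" by simp
  then show ?thesis using True unfolding ee_def E_car_def by simp
next
  case False then show ?thesis unfolding ee_def E_car_def by simp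
qed

lemma ee_hom: assumes "x \<in> A" "x1 \<in> A" shows "ee x1 (f x) = E_op (ee x1 x)"
proof (cases "sub x1 x")
  case True
  then obtain k where k: "(f^^k) x = x1" unfolding sub_def by blast
  have l: "lev (f x1) - lev x = int k + 1" using sub_lev assms k by blast
  show ?thesis
  proof (cases k)
    case 0
    then have "x = x1" using k by simp
    have "\<not> sub x1 (f x)"
    proof
      assume "sub x1 (f x)"
      then obtain m where "(f^^m) (f x) = x1" unfolding sub_def by blast
      then have "lev (f x1) - lev (f x) = int m + 1" using sub_lev assms fA by blast
      then show False using \<open>x = x1\<close> by simp
    qed
    then show ?thesis unfolding ee_def using True \<open>x = x1\<close> lev_f[OF assms(2)] by simp
  next
    case (Suc m)
    then have "(f^^m) (f x) = x1" using k by (simp only: funpow_Suc_right o_apply)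
    then have s: "sub x1 (f x)" unfolding sub_def by blast
    have "lev (f x) = lev x + 1" using lev_f assms by simp
    then have "nat (lev (f x1) - lev (f x)) = nat (lev (f x1) - lev x) - 1"
      "nat (lev (f x1) - lev x) > 1" using l Suc by auto
    then show ?thesis unfolding ee_def using True s by simp
  qed
next
  case False
  have "\<not> sub x1 (f x)"
  proof
    assume "sub x1 (f x)"
    then obtain m where "(f^^m) (f x) = x1" unfolding sub_def by blast
    then have "(f^^(Suc m)) x = x1" by (simp only: funpow_Suc_right o_apply)
    then show False using False unfolding sub_def by blast
  qed
  then show ?thesis unfolding ee_def using False lev_f assms by simp
qed

lemma ee_self: assumes "x1 \<in> A" shows "ee x1 x1 = Inr 1"
proof -
  have "sub x1 x1" unfolding sub_def by (auto intro: exI[of _ 0])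
  then show ?thesis unfolding ee_def using lev_f assms by simp
qed

lemma ee_sep: assumes "x \<in> A" "x1 \<in> A" "ee x1 x = Inr 1" shows "x = x1"
proof -
  have s: "sub x1 x" using assms(3) unfolding ee_def by (auto split: if_splits)
  then obtain k where k: "(f^^k) x = x1" unfolding sub_def by blast
  then have l: "lev (f x1) - lev x = int k + 1" using sub_lev assms by blast
  then have "nat (lev (f x1) - lev x) = Suc k" by simp
  then have "k = 0" using assms(3) s unfolding ee_def by simp
  then show ?thesis using k by simp
qed

lemma IP_eq_Ln: assumes uniq: "\<forall>z\<in>IP. \<forall>c1\<in>IP. \<forall>c2\<in>IP. f c1 = z \<and> f c2 = z \<longrightarrow> c1 = c2"
  shows "IP = range Ln"
proof
  show "range Ln \<subseteq> IP" using Ln_IP by blast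
  show "IP \<subseteq> range Ln"
  proof
    fix x assume x: "x \<in> IP"
    have ll: "lev x = lev (Ln (lev x))" by (simp add: lev_Ln)
    have "x = Ln (lev x)" using IP_eq_same_lev[OF x Ln_IP ll uniq] .
    then show "x \<in> range Ln" by blast
  qed
qed

lemma A_minus_Pa: "A - Pa = IP"
proof
  show "A - Pa \<subseteq> IP"
  proof
    fix x assume x: "x \<in> A - Pa"
    show "x \<in> IP"
    proof (rule ccontr)
      assume "x \<notin> IP" then show False using A_split x by blast
    qed
  qed
  show "IP \<subseteq> A - Pa"
  proof
    fix x assume "x \<in> IP" then show "x \<in> A - Pa" using IP_A IP_Pa_disj by blast
  qed
qed

lemma branch: assumes "\<not> malg_iso (A - Pa) f (UNIV :: int set) Z_op"
  shows "\<exists>u1 u2. u1 \<in> IP \<and> u2 \<in> IP \<and> u1 \<noteq> u2 \<and> f u1 = f u2"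
proof (rule ccontr)
  assume N: "\<not> ?thesis"
  have "\<forall>z\<in>IP. \<forall>c1\<in>IP. \<forall>c2\<in>IP. f c1 = z \<and> f c2 = z \<longrightarrow> c1 = c2"
  proof (intro ballI impI)
    fix z c1 c2 assume "z \<in> IP" "c1 \<in> IP" "c2 \<in> IP" "f c1 = z \<and> f c2 = z"
    then show "c1 = c2" using N by blast
  qed
  then have "IP = range Ln" by (rule IP_eq_Ln)
  then have "A - Pa = range Ln" using A_minus_Pa by simp
  then show False using assms Ln_iso_Z by simp
qed

lemma E_retract: assumes u: "u1 \<in> IP" "u2 \<in> IP" "u1 \<noteq> u2" "f u1 = f u2"
  shows "in_R E_car E_op A f"
proof -
  define z where "z = f u1"
  obtain s1 where s1: "s1 0 = u1" "\<forall>n. s1 n \<in> IP \<and> f (s1 (Suc n)) = s1 n" using IP_seq[OF u(1)] by blast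
  obtain s2 where s2: "s2 0 = u2" "\<forall>n. s2 n \<in> IP \<and> f (s2 (Suc n)) = s2 n" using IP_seq[OF u(2)] by blast
  have u1A: "u1 \<in> A" and u2A: "u2 \<in> A" and zA: "z \<in> A" using u IP_A fA z_def by auto
  have s1A: "s1 n \<in> A" for n using s1 IP_A by blast
  have s2A: "s2 n \<in> A" for n using s2 IP_A by blast
  have s1n: "(f^^n) (s1 n) = u1" for n by (induction n) (simp_all add: s1 funpow_swap1)
  have s2n: "(f^^n) (s2 n) = u2" for n by (induction n) (simp_all add: s2 funpow_swap1)
  have lz: "lev z = lev u1 + 1" using lev_f u1A z_def by simp
  have "lev (f u1) = lev u1 + 1" "lev (f u2) = lev u2 + 1" using lev_f u1A u2A by blast+
  then have lu2: "lev u2 = lev u1" using u(4) by simp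
  have ls1: "lev (s1 n) = lev u1 - int n" for n using lev_fn[OF s1A, of n n] s1n by simp
  have ls2: "lev (s2 n) = lev u1 - int n" for n using lev_fn[OF s2A, of n n] s2n lu2 by simp
  define jm :: "int + nat \<Rightarrow> 'a" where
    "jm y = (case y of Inl k \<Rightarrow> (if 0 \<le> k then (f^^(nat k)) z else s2 (nat (-k-1))) | Inr k \<Rightarrow> s1 (k - 1))" for y
  have jmA: "jm y \<in> A" for y unfolding jm_def using fnA zA s1A s2A by (cases y) auto
  have left: "ee u1 (jm y) = y" if "y \<in> E_car" for y
  proof (cases y)
    case (Inl k)
    show ?thesis
    proof (cases "0 \<le> k")
      case True
      have j: "jm y = (f^^(nat k)) z" unfolding jm_def using Inl True by simp
      have lj: "lev (jm y) = lev z + k" using j lev_fn[OF zA, of "nat k"] True by simp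
      have "\<not> sub u1 (jm y)"
      proof
        assume "sub u1 (jm y)"
        then obtain m where "(f^^m) (jm y) = u1" unfolding sub_def by blast
        then have "lev (jm y) + int m = lev u1" using lev_fn jmA by metis
        then show False using lj lz True by simp
      qed
      then show ?thesis unfolding ee_def using lj Inl z_def by simp
    next
      case False
      define n where "n = nat (-k-1)"
      have j: "jm y = s2 n" unfolding jm_def n_def using Inl False by simp
      have "\<not> sub u1 (jm y)"
      proof
        assume "sub u1 (jm y)"
        then obtain m where m: "(f^^m) (s2 n) = u1" unfolding sub_def j by blast
        then have "lev (s2 n) + int m = lev u1" using lev_fn s2A by metis
        then have "m = n" using ls2 by simp
        then show False using m s2n u(3) by simp
      qed
      moreover have "lev (jm y) - lev (f u1) = k" using j ls2 lz z_def n_def False by simp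
      ultimately show ?thesis unfolding ee_def using Inl by simp
    qed
  next
    case (Inr k)
    then have k1: "k \<ge> 1" using that unfolding E_car_def by auto
    have j: "jm y = s1 (k - 1)" unfolding jm_def using Inr by simp
    have "sub u1 (jm y)" unfolding sub_def j using s1n by blast
    moreover have "nat (lev (f u1) - lev (jm y)) = k" using j ls1 lz z_def k1 by simp
    ultimately show ?thesis unfolding ee_def using Inr by simp
  qed
  have hom: "jm (E_op y) = f (jm y)" if "y \<in> E_car" for y
  proof (cases y)
    case (Inl k)
    show ?thesis
    proof (cases "0 \<le> k")
      case True
      have "nat (k + 1) = Suc (nat k)" using True by simp
      then show ?thesis unfolding jm_def using Inl True by simp
    next
      case False
      show ?thesis
      proof (cases "k = -1")
        case True
        then show ?thesis unfolding jm_def using Inl s2 u(4) z_def by simp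
      next
        case False
        then have "nat (-k-1) = Suc (nat (-(k+1)-1))" using \<open>\<not> 0 \<le> k\<close> by simp
        then show ?thesis unfolding jm_def using Inl False \<open>\<not> 0 \<le> k\<close> s2 by simp
      qed
    qed
  next
    case (Inr k)
    then have k1: "k \<ge> 1" using that unfolding E_car_def by auto
    show ?thesis
    proof (cases "k = 1")
      case True
      then show ?thesis unfolding jm_def using Inr s1 z_def by simp
    next
      case False
      then have kk: "k - 1 = Suc (k - 1 - 1)" using k1 by simp
      have "E_op y = Inr (k - 1)" using Inr False k1 by simp
      then have "jm (E_op y) = s1 (k - 1 - 1)" unfolding jm_def by simp
      moreover have "jm y = s1 (Suc (k - 1 - 1))" unfolding jm_def using Inr kk by simp
      ultimately show ?thesis using s1 by simp
    qed
  qed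
  define M where "M = jm ` E_car"
  have "is_retract M A f" unfolding is_retract_def
  proof (intro conjI)
    show "M \<noteq> {}" unfolding M_def E_car_def by blast
    show "M \<subseteq> A" unfolding M_def using jmA by blast
    show "\<forall>x\<in>M. f x \<in> M" unfolding M_def
    proof
      fix x assume "x \<in> jm ` E_car"
      then obtain y where y: "y \<in> E_car" "x = jm y" by blast
      then have "f x = jm (E_op y)" using hom by simp
      then show "f x \<in> jm ` E_car" using E_op_closed[OF y(1)] by blast
    qed
    show "\<exists>h. (\<forall>x\<in>A. h x \<in> M \<and> h (f x) = f (h x)) \<and> (\<forall>x\<in>M. h x = x)"
    proof (intro exI[of _ "\<lambda>x. jm (ee u1 x)"] conjI ballI)
      fix x assume x: "x \<in> A"
      show "jm (ee u1 x) \<in> M" unfolding M_def using ee_E[OF x u1A] by blast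
      show "jm (ee u1 (f x)) = f (jm (ee u1 x))" using ee_hom[OF x u1A] hom ee_E[OF x u1A] by simp
    next
      fix x assume "x \<in> M"
      then show "jm (ee u1 x) = x" unfolding M_def using left by auto
    qed
  qed
  moreover have "malg_iso E_car E_op M f" unfolding malg_iso_def
  proof (intro exI[of _ jm] conjI)
    have "inj_on jm E_car" using left by (metis inj_on_inverseI)
    then show "bij_betw jm E_car M" unfolding M_def bij_betw_def by blast
    show "\<forall>x\<in>E_car. jm (E_op x) = f (jm x)" using hom by blast
  qed
  ultimately show ?thesis unfolding in_R_def by blast
qed

end
context L45 begin

definition opB :: "'a + (int + nat) \<Rightarrow> 'a + (int + nat)" where
  "opB s = (case s of Inl x \<Rightarrow> Inl (f x) | Inr y \<Rightarrow> Inr y)"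

definition opE :: "'a + (int + nat) \<Rightarrow> 'a + (int + nat)" where
  "opE s = (case s of Inl x \<Rightarrow> Inl x | Inr e \<Rightarrow> Inr (E_op e))"

definition II :: "'a set set" where "II = insert {} ((\<lambda>x. {x}) ` A)"

definition CC :: "'a set \<Rightarrow> ('a + (int + nat)) set \<times> ('a + (int + nat) \<Rightarrow> 'a + (int + nat))" where
  "CC i = (if i = {} then (Inl ` Bs, opB) else (Inr ` E_car, opE))"

definition PP where "PP = prod_carrier II CC"
definition FF where "FF = prod_op II CC"

definition phi :: "'a \<Rightarrow> ('a set \<Rightarrow> 'a + (int + nat))" where
  "phi x = restrict (\<lambda>i. if i = {} then Inl (rmap x) else Inr (ee (the_elem i) x)) II"

lemma II_cases: "i \<in> II \<Longrightarrow> i = {} \<or> (\<exists>x1\<in>A. i = {x1})" unfolding II_def by blast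

lemma phi_P: assumes "x \<in> A" shows "phi x \<in> PP"
  unfolding PP_def prod_carrier_def phi_def
proof (rule restrict_PiE_iff[THEN iffD2], intro ballI)
  fix i assume i: "i \<in> II"
  show "(if i = {} then Inl (rmap x) else Inr (ee (the_elem i) x)) \<in> fst (CC i)"
  proof (cases "i = {}")
    case True then show ?thesis unfolding CC_def using rmap_B assms by simp
  next
    case False
    then obtain x1 where "x1 \<in> A" "i = {x1}" using II_cases i by blast
    then show ?thesis unfolding CC_def using ee_E assms by simp
  qed
qed

lemma P_coord: assumes "p \<in> PP" "i \<in> II" shows "p i \<in> fst (CC i)"
  using assms unfolding PP_def prod_carrier_def by blast

lemma II_empty: "{} \<in> II" unfolding II_def by blast

lemma FF_P: assumes "p \<in> PP" shows "FF p \<in> PP"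
  unfolding PP_def prod_carrier_def FF_def prod_op_def
proof (rule restrict_PiE_iff[THEN iffD2], intro ballI)
  fix i assume i: "i \<in> II"
  have pi: "p i \<in> fst (CC i)" using P_coord assms i by blast
  show "snd (CC i) (p i) \<in> fst (CC i)"
  proof (cases "i = {}")
    case True
    then obtain b where "b \<in> Bs" "p i = Inl b" using pi unfolding CC_def by auto
    then show ?thesis using True Bs_f unfolding CC_def opB_def by simp
  next
    case False
    then obtain e where "e \<in> E_car" "p i = Inr e" using pi unfolding CC_def by auto
    then show ?thesis using False E_op_closed unfolding CC_def opE_def by simp
  qed
qed

lemma FF_Pn: "p \<in> PP \<Longrightarrow> (FF^^n) p \<in> PP"
  by (induction n) (auto simp: FF_P)

lemma phi_hom: assumes "x \<in> A" shows "FF (phi x) = phi (f x)"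
proof
  fix i
  show "FF (phi x) i = phi (f x) i"
  proof (cases "i \<in> II")
    case False then show ?thesis unfolding FF_def prod_op_def phi_def by simp
  next
    case True
    show ?thesis
    proof (cases "i = {}")
      case True
      then show ?thesis unfolding FF_def prod_op_def phi_def CC_def opB_def
        using rmap_hom assms II_empty by simp
    next
      case False
      then obtain x1 where x1: "x1 \<in> A" "i = {x1}" using II_cases \<open>i \<in> II\<close> by blast
      then show ?thesis unfolding FF_def prod_op_def phi_def CC_def opE_def
        using ee_hom[OF assms x1(1)] \<open>i \<in> II\<close> by simp
    qed
  qed
qed

lemma phi_inj: "inj_on phi A"
proof (rule inj_onI)
  fix x y assume x: "x \<in> A" and y: "y \<in> A" and e: "phi x = phi y"
  have yi: "{y} \<in> II" unfolding II_def using y by blast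
  have "phi x {y} = Inr (ee y x)" "phi y {y} = Inr (ee y y)" unfolding phi_def using yi by simp_all
  then have "ee y x = ee y y" using e by simp
  then have "ee y x = Inr 1" using ee_self y by simp
  then show "x = y" using ee_sep x y by blast
qed

definition pB :: "('a set \<Rightarrow> 'a + (int + nat)) \<Rightarrow> 'a" where "pB p = projl (p {})"

lemma pB_B: assumes "p \<in> PP" shows "pB p \<in> Bs" "p {} = Inl (pB p)"
proof -
  have "p {} \<in> Inl ` Bs" using P_coord[OF assms II_empty] unfolding CC_def by simp
  then show "pB p \<in> Bs" "p {} = Inl (pB p)" unfolding pB_def by auto
qed

lemma pB_FF: assumes "p \<in> PP" shows "pB (FF p) = f (pB p)"
proof -
  have e: "p {} = Inl (pB p)" using pB_B[OF assms] by blast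
  have "FF p {} = opB (p {})" unfolding FF_def prod_op_def CC_def using II_empty by simp
  then have "FF p {} = Inl (f (pB p))" using e unfolding opB_def by simp
  then show ?thesis unfolding pB_def by simp
qed

lemma pB_phi: "pB (phi x) = rmap x"
  unfolding pB_def phi_def using II_empty by simp

definition stp :: "'a \<Rightarrow> ('a set \<Rightarrow> 'a + (int + nat)) \<Rightarrow> 'a" where
  "stp y p = (if y \<in> IP then (SOME c. c \<in> IP \<and> f c = y) else (SOME c. c \<in> A \<and> f c = y \<and> beq c (pB p)))"

definition ps :: "nat \<Rightarrow> ('a set \<Rightarrow> 'a + (int + nat)) \<Rightarrow> 'a" where
  "ps = iter_choice (the_inv_into A phi) FF stp"

lemma ps_0: "ps 0 p = the_inv_into A phi p" unfolding ps_def by simp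
lemma ps_Suc: "ps (Suc n) p = stp (ps n (FF p)) p" unfolding ps_def by simp

lemma stp_spec: assumes p: "p \<in> PP" and y: "y \<in> A" and inv: "y \<in> IP \<or> beq y (pB (FF p))"
  shows "stp y p \<in> A \<and> (stp y p \<in> IP \<or> beq (stp y p) (pB p)) \<and> f (stp y p) = y"
proof (cases "y \<in> IP")
  case True
  have "\<exists>c. c \<in> IP \<and> f c = y" using IP_child True by blast
  then have "(SOME c. c \<in> IP \<and> f c = y) \<in> IP \<and> f (SOME c. c \<in> IP \<and> f c = y) = y" by (rule someI_ex)
  then show ?thesis unfolding stp_def using True IP_A by simp
next
  case False
  then have b: "beq y (f (pB p))" using inv pB_FF p by simp
  have "pB p \<in> A" using pB_B p Bs_A by blast
  then have "\<exists>c. c \<in> A \<and> f c = y \<and> beq c (pB p)" using beq_child2[OF b] by blast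
  then have "(SOME c. c \<in> A \<and> f c = y \<and> beq c (pB p)) \<in> A \<and> f (SOME c. c \<in> A \<and> f c = y \<and> beq c (pB p)) = y
      \<and> beq (SOME c. c \<in> A \<and> f c = y \<and> beq c (pB p)) (pB p)"
    by (rule someI_ex)
  then show ?thesis unfolding stp_def using False by simp
qed

lemma ps_inv: "p \<in> PP \<Longrightarrow> (FF^^n) p \<in> phi ` A \<Longrightarrow> ps n p \<in> A \<and> (ps n p \<in> IP \<or> beq (ps n p) (pB p))"
proof (induction n arbitrary: p)
  case 0
  then obtain x where x: "x \<in> A" "p = phi x" by auto
  have e: "ps 0 p = x" using ps_0 x the_inv_into_f_f[OF phi_inj x(1)] by simp
  show ?case
  proof (cases "x \<in> IP")
    case True then show ?thesis using e x by simp
  next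
    case False
    then have "x \<in> Pa" using A_split x by blast
    then have "beq x (rmap x)" using rmap_beq beq_sym by blast
    then show ?thesis using e x pB_phi by simp
  qed
next
  case (Suc n)
  have FP: "FF p \<in> PP" using FF_P Suc.prems by blast
  have "(FF^^n) (FF p) \<in> phi ` A" using Suc.prems(2) by (simp only: funpow_Suc_right o_apply)
  then have IH: "ps n (FF p) \<in> A \<and> (ps n (FF p) \<in> IP \<or> beq (ps n (FF p)) (pB (FF p)))" using Suc.IH FP by blast
  then show ?case using stp_spec[OF Suc.prems(1)] ps_Suc by simp
qed

lemma ps_f: assumes "p \<in> PP" "(FF^^(Suc n)) p \<in> phi ` A" shows "f (ps (Suc n) p) = ps n (FF p)"
proof -
  have FP: "FF p \<in> PP" using FF_P assms by blast
  have "(FF^^n) (FF p) \<in> phi ` A" using assms(2) by (simp only: funpow_Suc_right o_apply)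
  then have IH: "ps n (FF p) \<in> A \<and> (ps n (FF p) \<in> IP \<or> beq (ps n (FF p)) (pB (FF p)))" using ps_inv FP by blast
  then show ?thesis using stp_spec[OF assms(1)] ps_Suc by simp
qed

definition DD where "DD = {p. \<exists>m. (FF^^m) p \<in> phi ` A}"
definition mm where "mm p = (LEAST m. (FF^^m) p \<in> phi ` A)"

definition psi :: "('a set \<Rightarrow> 'a + (int + nat)) \<Rightarrow> 'a" where
  "psi p = (if p \<in> DD then ps (mm p) p else Ln (lev (pB p)))"

lemma mm_in: assumes "p \<in> DD" shows "(FF^^(mm p)) p \<in> phi ` A"
proof -
  have "\<exists>m. (FF^^m) p \<in> phi ` A" using assms unfolding DD_def by blast
  then show ?thesis unfolding mm_def by (rule LeastI_ex)
qed

lemma psi_A: assumes "p \<in> PP" shows "psi p \<in> A"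
proof (cases "p \<in> DD")
  case True then show ?thesis unfolding psi_def using ps_inv[OF assms mm_in[OF True]] by simp
next
  case False then show ?thesis unfolding psi_def using Ln_A by simp
qed

lemma psi_phi: assumes "x \<in> A" shows "psi (phi x) = x"
proof -
  have D: "phi x \<in> DD" unfolding DD_def using assms by (auto intro!: exI[of _ 0])
  have "mm (phi x) = 0" unfolding mm_def using assms by (intro Least_eq_0) simp
  then show ?thesis unfolding psi_def using D ps_0 the_inv_into_f_f[OF phi_inj assms] by simp
qed

lemma psi_hom: assumes p: "p \<in> PP" shows "psi (FF p) = f (psi p)"
proof (cases "p \<in> DD")
  case True
  show ?thesis
  proof (cases "mm p")
    case 0
    then obtain x where x: "x \<in> A" "p = phi x" using mm_in[OF True] by auto
    then have "FF p = phi (f x)" using phi_hom by simp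
    then show ?thesis using psi_phi x fA by simp
  next
    case (Suc n)
    have m: "(FF^^(Suc n)) p \<in> phi ` A" using mm_in[OF True] Suc by simp
    then have mF: "(FF^^n) (FF p) \<in> phi ` A" by (simp only: funpow_Suc_right o_apply)
    then have DF: "FF p \<in> DD" unfolding DD_def by blast
    have "mm (FF p) = n"
    proof (rule antisym)
      show "mm (FF p) \<le> n" unfolding mm_def using mF by (rule Least_le)
      show "n \<le> mm (FF p)"
      proof (rule ccontr)
        assume "\<not> n \<le> mm (FF p)"
        then have lt: "Suc (mm (FF p)) < Suc n" by simp
        have "(FF^^(Suc (mm (FF p)))) p \<in> phi ` A" using mm_in[OF DF] by (simp only: funpow_Suc_right o_apply)
        then have "mm p \<le> Suc (mm (FF p))" unfolding mm_def by (rule Least_le)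
        then show False using lt Suc by simp
      qed
    qed
    then have "psi (FF p) = ps n (FF p)" unfolding psi_def using DF by simp
    moreover have "psi p = ps (Suc n) p" unfolding psi_def using True Suc by simp
    ultimately show ?thesis using ps_f[OF p m] by simp
  qed
next
  case False
  have "FF p \<notin> DD"
  proof
    assume "FF p \<in> DD"
    then obtain m where "(FF^^m) (FF p) \<in> phi ` A" unfolding DD_def by blast
    then have "(FF^^(Suc m)) p \<in> phi ` A" by (simp only: funpow_Suc_right o_apply)
    then show False using False unfolding DD_def by blast
  qed
  then have "psi (FF p) = Ln (lev (f (pB p)))" unfolding psi_def using pB_FF p by simp
  also have "\<dots> = Ln (lev (pB p) + 1)" using lev_f pB_B p Bs_A by simp
  also have "\<dots> = f (psi p)" unfolding psi_def using False Ln_f by simp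
  finally show ?thesis .
qed

lemma A_in_V: "in_V (\<lambda>(S :: ('a + (int + nat)) set) h. malg_iso S h Bs f \<or> malg_iso S h E_car E_op)
          TYPE('a set) A f"
  unfolding in_V_def
proof (intro exI[of _ II] exI[of _ CC])
  have part1: "\<forall>i\<in>II. is_malg (fst (CC i)) (snd (CC i)) \<and>
     (malg_iso (fst (CC i)) (snd (CC i)) Bs f \<or> malg_iso (fst (CC i)) (snd (CC i)) E_car E_op)"
  proof
  fix i assume i: "i \<in> II"
  show "is_malg (fst (CC i)) (snd (CC i)) \<and>
     (malg_iso (fst (CC i)) (snd (CC i)) Bs f \<or> malg_iso (fst (CC i)) (snd (CC i)) E_car E_op)"
  proof (cases "i = {}")
    case True
    have m: "is_malg (Inl ` Bs) opB" unfolding is_malg_def opB_def using Bs_f a_T Bs_def by auto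
    have "malg_iso (Inl ` Bs) opB Bs f" unfolding malg_iso_def
    proof (intro exI[of _ projl] conjI)
      show "bij_betw projl (Inl ` Bs) Bs" unfolding bij_betw_def inj_on_def by force
      show "\<forall>x\<in>Inl ` Bs. projl (opB x) = f (projl x)" unfolding opB_def by auto
    qed
    then show ?thesis using m True unfolding CC_def by simp
  next
    case False
    have m: "is_malg (Inr ` E_car) opE" unfolding is_malg_def opE_def using E_op_closed E_car_def by auto
    have "malg_iso (Inr ` E_car) opE E_car E_op" unfolding malg_iso_def
    proof (intro exI[of _ projr] conjI)
      show "bij_betw projr (Inr ` E_car) E_car" unfolding bij_betw_def inj_on_def by force
      show "\<forall>x\<in>Inr ` E_car. projr (opE x) = E_op (projr x)" unfolding opE_def by auto
    qed
    then show ?thesis using m False unfolding CC_def by simp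
  qed
  qed
  define M where "M = phi ` A"
  have "is_retract M PP FF" unfolding is_retract_def
  proof (intro conjI)
    show "M \<noteq> {}" unfolding M_def using aA by blast
    show "M \<subseteq> PP" unfolding M_def using phi_P by blast
    show "\<forall>x\<in>M. FF x \<in> M" unfolding M_def using phi_hom fA by auto
    show "\<exists>h. (\<forall>x\<in>PP. h x \<in> M \<and> h (FF x) = FF (h x)) \<and> (\<forall>x\<in>M. h x = x)"
    proof (intro exI[of _ "\<lambda>p. phi (psi p)"] conjI ballI)
      fix p assume p: "p \<in> PP"
      show "phi (psi p) \<in> M" unfolding M_def using psi_A p by blast
      show "phi (psi (FF p)) = FF (phi (psi p))" using psi_hom p phi_hom psi_A by simp
    next
      fix x assume "x \<in> M" then show "phi (psi x) = x" unfolding M_def using psi_phi by auto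
    qed
  qed
  moreover have "malg_iso A f M FF" unfolding malg_iso_def
  proof (intro exI[of _ phi] conjI)
    show "bij_betw phi A M" unfolding M_def bij_betw_def using phi_inj by blast
    show "\<forall>x\<in>A. phi (f x) = FF (phi x)" using phi_hom by simp
  qed
  ultimately have "in_R A f (prod_carrier II CC) (prod_op II CC)" unfolding in_R_def PP_def FF_def by blast
  then show "(\<forall>i\<in>II. is_malg (fst (CC i)) (snd (CC i)) \<and>
     (malg_iso (fst (CC i)) (snd (CC i)) Bs f \<or> malg_iso (fst (CC i)) (snd (CC i)) E_car E_op)) \<and>
     in_R A f (prod_carrier II CC) (prod_op II CC)" using part1 by blast
qed

end

lemma in_R_to_V:
  fixes A :: "'a set" and X :: "'b set"
  assumes R: "in_R X g A f" and mA: "is_malg A f"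
  shows "in_V (\<lambda>(S :: 'a set) h. malg_iso S h A f) TYPE('i) X g"
proof -
  define i0 :: 'i where "i0 = undefined"
  define C :: "'i \<Rightarrow> 'a set \<times> ('a \<Rightarrow> 'a)" where "C = (\<lambda>_. (A, f))"
  define P where "P = prod_carrier {i0} C"
  define F where "F = prod_op {i0} C"
  define io :: "'a \<Rightarrow> 'i \<Rightarrow> 'a" where "io x = restrict (\<lambda>_. x) {i0}" for x
  obtain M where M: "is_retract M A f" "malg_iso X g M f" using R unfolding in_R_def by blast
  obtain rho where rho: "\<forall>x\<in>A. rho x \<in> M \<and> rho (f x) = f (rho x)" "\<forall>x\<in>M. rho x = x"
    using M(1) unfolding is_retract_def by blast
  have MA: "M \<subseteq> A" "M \<noteq> {}" "\<forall>x\<in>M. f x \<in> M" using M(1) unfolding is_retract_def by auto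
  obtain k where k: "bij_betw k X M" "\<forall>x\<in>X. k (g x) = f (k x)" using M(2) unfolding malg_iso_def by blast
  have ioP: "io x \<in> P" if "x \<in> A" for x unfolding io_def P_def prod_carrier_def C_def using that by simp
  have Fio: "F (io x) = io (f x)" for x unfolding F_def prod_op_def io_def C_def by auto
  have io_inj: "io x = io y \<Longrightarrow> x = y" for x y unfolding io_def by (metis restrict_apply' singletonI)
  have Pi0: "p i0 \<in> A" if "p \<in> P" for p using that unfolding P_def prod_carrier_def C_def by auto
  have Fi0: "F p i0 = f (p i0)" for p unfolding F_def prod_op_def C_def by simp
  define M' where "M' = io ` M"
  have "is_retract M' P F" unfolding is_retract_def
  proof (intro conjI)
    show "M' \<noteq> {}" unfolding M'_def using MA by blast
    show "M' \<subseteq> P" unfolding M'_def using ioP MA by blast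
    show "\<forall>x\<in>M'. F x \<in> M'" unfolding M'_def using Fio MA by auto
    show "\<exists>h. (\<forall>x\<in>P. h x \<in> M' \<and> h (F x) = F (h x)) \<and> (\<forall>x\<in>M'. h x = x)"
    proof (intro exI[of _ "\<lambda>p. io (rho (p i0))"] conjI ballI)
      fix p assume p: "p \<in> P"
      show "io (rho (p i0)) \<in> M'" unfolding M'_def using rho Pi0 p by blast
      show "io (rho (F p i0)) = F (io (rho (p i0)))" using Fi0 rho Pi0[OF p] Fio by simp
    next
      fix x assume "x \<in> M'"
      then obtain y where "y \<in> M" "x = io y" unfolding M'_def by blast
      moreover have "io y i0 = y" unfolding io_def by simp
      ultimately show "io (rho (x i0)) = x" using rho by simp
    qed
  qed
  moreover have "malg_iso X g M' F" unfolding malg_iso_def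
  proof (intro exI[of _ "\<lambda>x. io (k x)"] conjI)
    have "inj_on (\<lambda>x. io (k x)) X" using k(1) io_inj unfolding bij_betw_def inj_on_def by metis
    moreover have "(\<lambda>x. io (k x)) ` X = M'" unfolding M'_def using k(1) unfolding bij_betw_def by auto
    ultimately show "bij_betw (\<lambda>x. io (k x)) X M'" unfolding bij_betw_def by blast
    show "\<forall>x\<in>X. io (k (g x)) = F (io (k x))" using k(2) Fio by simp
  qed
  ultimately have "in_R X g P F" unfolding in_R_def by blast
  moreover have "\<forall>i\<in>{i0}. is_malg (fst (C i)) (snd (C i)) \<and> malg_iso (fst (C i)) (snd (C i)) A f"
  proof -
    have "malg_iso A f A f" unfolding malg_iso_def by (intro exI[of _ id]) simp
    then show ?thesis unfolding C_def using mA by simp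
  qed
  ultimately show ?thesis unfolding in_V_def P_def F_def by blast
qed

theorem lemma4p5:
  fixes A :: "'a set" and f :: "'a \<Rightarrow> 'a" and a :: 'a
  assumes "is_malg A f"
    and "connected_malg A f"
    and "a \<in> A"
    and "prime_part A f = {a}"
    and "\<not> has_cycle A f"
    and "\<not> malg_iso (A - Pset A f a) f (UNIV :: int set) Z_op"
  shows "\<exists>(B :: 'a set) (g :: 'a \<Rightarrow> 'a).
     in_R B g A f \<and> in_S1 B g \<and>
     in_V (\<lambda>(S :: 'a set) h. malg_iso S h A f) TYPE('a set) B g \<and>
     in_V (\<lambda>(S :: 'a set) h. malg_iso S h A f) TYPE('a set) E_car E_op \<and>
     in_V (\<lambda>(S :: ('a + (int + nat)) set) h. malg_iso S h B g \<or> malg_iso S h E_car E_op)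
          TYPE('a set) A f"
proof -
  interpret L: L45 A f a using assms(1-5) by unfold_locales
  have R: "in_R L.Bs f A f"
  proof -
    have "is_retract L.Bs A f" unfolding is_retract_def
    proof (intro conjI)
      show "L.Bs \<noteq> {}" using L.a_T unfolding L.Bs_def by blast
      show "L.Bs \<subseteq> A" using L.Bs_A by blast
      show "\<forall>x\<in>L.Bs. f x \<in> L.Bs" using L.Bs_f by blast
      show "\<exists>h. (\<forall>x\<in>A. h x \<in> L.Bs \<and> h (f x) = f (h x)) \<and> (\<forall>x\<in>L.Bs. h x = x)"
        using L.rmap_B L.rmap_hom L.rmap_id by blast
    qed
    moreover have "malg_iso L.Bs f L.Bs f" unfolding malg_iso_def by (intro exI[of _ id]) simp
    ultimately show ?thesis unfolding in_R_def by blast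
  qed
  obtain u1 u2 where u: "u1 \<in> L.IP" "u2 \<in> L.IP" "u1 \<noteq> u2" "f u1 = f u2"
    using L.branch assms(6) by blast
  have ER: "in_R E_car E_op A f" using L.E_retract[OF u] .
  show ?thesis
    using R L.S1_Bs in_R_to_V[OF R assms(1)] in_R_to_V[OF ER assms(1)] L.A_in_V by blast
qed

end
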